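(* Let $n,t$ be positive integers and let $\mathcal{B}$ be a partition of $[n]=\{1,\ldots,n\}$ into $t$ nonempty blocks. For every nonempty $\mathcal{B}'\subseteq\mathcal{B}$ and every $\underline{i}\in[n]$, $$K[\underline{i},\mathcal{B}']=\min_{\underline{B}\in\mathcal{B}'}\Big\{\delta(\underline{i},\underline{B})+K[\omega(\underline{i},\underline{B})+_n1,\ \mathcal{B}'\setminus\{\underline{B}\}]\Big\},$$ where for the empty set one uses the convention $K[1,\varnothing]=0$ and $K[\underline{i},\varnothing]=1$ for $\underline{i}\neq1$. In particular, the minimum number of segments of a valid placement of $\mathcal{B}$, which is $K[1,\mathcal{B}]$, is computed by this recurrence.
   Context: Each block $B\in\mathcal{B}$ is written as an increasing sequence $\langle i_1<i_2<\cdots<i_\ell\rangle$ of its elements. Let $A(n)$ be the infinite sequence obtained by concatenating infinitely many copies of $\langle1,2,\ldots,n\rangle$. Each copy is called a segment, and the segments are numbered $1,2,3,\ldots$. A position of $A(n)$ is a pair $(\kappa,v)$ with segment index $\kappa\ge1$ and value $v\in[n]$. Positions are ordered lexicographically. For a nonempty $\mathcal{B}'\subseteq\mathcal{B}$, a placement of $\mathcal{B}'$ assigns to each element $x\in\bigcup_{B\in\mathcal{B}'}B$ a position $(\kappa_x,x)$ of $A(n)$, with distinct elements receiving distinct positions. A placement is valid if, for any two distinct blocks $B,C\in\mathcal{B}'$, no element of $B$ is placed strictly between the smallest and the largest positions occupied by elements of $C$. The number of segments used by a placement is the largest segment index $\kappa_x$ occurring in it. For $\underline{i}\in[n]$, $K[\underline{i},\mathcal{B}']$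 denotes the minimum number of segments used by a valid placement of $\mathcal{B}'$ in which every element is placed at a position $\ge(1,\underline{i})$. For $\underline{i}\in[n]$ and $B=\langle i_1<\cdots<i_\ell\rangle$: - If $\underline{i}\le i_1$ or $i_\ell<\underline{i}$, then $\omega(\underline{i},B)=i_\ell$. - Otherwise $i_l<\underline{i}\le i_{l+1}$ for a unique $l\in[\ell-1]$, and $\omega(\underline{i},B)=i_l$. $\delta(\underline{i},B)=0$ if $\underline{i}\le i_1$ and $i_\ell<n$, and $\delta(\underline{i},B)=1$ otherwise. $a+_n1$ denotes $a+1$ reduced modulo $n$, with result $0$ replaced by $n$; thus $a+_n1=a+1$ for $a<n$ and $n+_n1=1$. A valid placement of $\mathcal{B}$ corresponds to a solution of the Train Marshalling Problem: placing element $i$ in segment $\kappa$ means sending railcar $i$ to classification track $\kappa$. The minimum number of classification tracks therefore equals $K[1,\mathcal{B}]$. *)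

theory Defs
  imports Main "HOL-Library.Disjoint_Sets" "HOL-Library.Product_Lexorder"
begin

(* Positions of A(n) are pairs (segment index, value), ordered lexicographically
   (the order on nat \<times> nat from Product_Lexorder).
   A placement of Bs' is a segment assignment kappa : element x goes to (kappa x, x);
   distinct elements automatically get distinct positions. *)

definition pos :: "(nat \<Rightarrow> nat) \<Rightarrow> nat \<Rightarrow> nat \<times> nat" where
  "pos kappa x = (kappa x, x)"

definition valid_placement :: "nat set set \<Rightarrow> (nat \<Rightarrow> nat) \<Rightarrow> bool" where
  "valid_placement Bs kappa \<longleftrightarrow>
     (\<forall>x\<in>\<Union>Bs. kappa x \<ge> 1) \<and>
     (\<forall>B\<in>Bs. \<forall>C\<in>Bs. B \<noteq> C \<longrightarrow>
        (\<forall>b\<in>B. \<not> (Min (pos kappa ` C) < pos kappa b \<and> pos kappa b < Max (pos kappa ` C))))"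

definition segments_used :: "nat set set \<Rightarrow> (nat \<Rightarrow> nat) \<Rightarrow> nat" where
  "segments_used Bs kappa = Max (kappa ` \<Union>Bs)"

definition K :: "nat \<Rightarrow> nat set set \<Rightarrow> nat" where
  "K i Bs = (if Bs = {} then (if i = 1 then 0 else 1)
             else (LEAST m. \<exists>kappa. valid_placement Bs kappa
                        \<and> (\<forall>x\<in>\<Union>Bs. (1, i) \<le> pos kappa x)
                        \<and> segments_used Bs kappa = m))"

definition omega :: "nat \<Rightarrow> nat set \<Rightarrow> nat" where
  "omega i B = (if i \<le> Min B \<or> Max B < i then Max B else Max {x\<in>B. x < i})"

definition delta :: "nat \<Rightarrow> nat \<Rightarrow> nat set \<Rightarrow> nat" where
  "delta n i B = (if i \<le> Min B \<and> Max B < n then 0 else 1)"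

definition plus_n1 :: "nat \<Rightarrow> nat \<Rightarrow> nat" where
  "plus_n1 n a = (if (a + 1) mod n = 0 then n else (a + 1) mod n)"

end

theory Submission
  imports Defs
begin

definition good :: "nat \<Rightarrow> nat set set \<Rightarrow> bool" where
  "good n S \<longleftrightarrow> finite S \<and> (\<forall>B\<in>S. finite B \<and> B \<noteq> {} \<and> B \<subseteq> {1..n})
     \<and> (\<forall>B\<in>S. \<forall>C\<in>S. B \<noteq> C \<longrightarrow> B \<inter> C = {})"

definition vp :: "nat set set \<Rightarrow> (nat \<Rightarrow> nat) \<Rightarrow> bool" where
  "vp S \<kappa> \<longleftrightarrow> (\<forall>x\<in>\<Union>S. 1 \<le> \<kappa> x) \<and>
     (\<forall>B\<in>S. \<forall>C\<in>S. B \<noteq> C \<longrightarrow> (\<forall>b\<in>B. \<forall>c1\<in>C. \<forall>c2\<in>C.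
        \<not> (pos \<kappa> c1 < pos \<kappa> b \<and> pos \<kappa> b < pos \<kappa> c2)))"

lemma valid_alt:
  assumes "\<forall>B\<in>S. finite B \<and> B \<noteq> {}"
  shows "valid_placement S \<kappa> \<longleftrightarrow> vp S \<kappa>"
proof
  assume v: "valid_placement S \<kappa>"
  show "vp S \<kappa>"
    unfolding vp_def
  proof (intro conjI ballI impI notI)
    fix x assume "x \<in> \<Union>S" then show "1 \<le> \<kappa> x" using v unfolding valid_placement_def by auto
  next
    fix B C b c1 c2 assume h: "B \<in> S" "C \<in> S" "B \<noteq> C" "b \<in> B" "c1 \<in> C" "c2 \<in> C"
      "pos \<kappa> c1 < pos \<kappa> b \<and> pos \<kappa> b < pos \<kappa> c2"
    have f: "finite (pos \<kappa> ` C)" using assms h by auto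
    have "Min (pos \<kappa> ` C) \<le> pos \<kappa> c1" using f h by auto
    moreover have "pos \<kappa> c2 \<le> Max (pos \<kappa> ` C)" using f h by auto
    ultimately show False using v h unfolding valid_placement_def by force
  qed
next
  assume v: "vp S \<kappa>"
  show "valid_placement S \<kappa>"
    unfolding valid_placement_def
  proof (intro conjI ballI impI notI)
    fix x assume "x \<in> \<Union>S" then show "1 \<le> \<kappa> x" using v unfolding vp_def by auto
  next
    fix B C b assume h: "B \<in> S" "C \<in> S" "B \<noteq> C" "b \<in> B"
      "Min (pos \<kappa> ` C) < pos \<kappa> b \<and> pos \<kappa> b < Max (pos \<kappa> ` C)"
    have f: "finite (pos \<kappa> ` C)" "pos \<kappa> ` C \<noteq> {}" using assms h by auto
    obtain c1 where "c1 \<in> C" "Min (pos \<kappa> ` C) = pos \<kappa> c1" using Min_in[OF f] by auto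
    moreover obtain c2 where "c2 \<in> C" "Max (pos \<kappa> ` C) = pos \<kappa> c2" using Max_in[OF f] by auto
    ultimately show False using v h unfolding vp_def by metis
  qed
qed

lemma pos_less: "pos \<kappa> a < pos \<kappa> b \<longleftrightarrow> \<kappa> a < \<kappa> b \<or> \<kappa> a = \<kappa> b \<and> a < b"
  by (auto simp: pos_def)
lemma pos_le: "pos \<kappa> a \<le> pos \<kappa> b \<longleftrightarrow> \<kappa> a < \<kappa> b \<or> \<kappa> a = \<kappa> b \<and> a \<le> b"
  by (auto simp: pos_def)
lemma pos_ge1[simp]: "(1, i) \<le> pos \<kappa> x \<longleftrightarrow> 1 < \<kappa> x \<or> \<kappa> x = 1 \<and> i \<le> x"
  by (auto simp: pos_def)

definition eb :: "nat \<Rightarrow> nat set \<Rightarrow> nat" where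
  "eb i B = (if i \<le> Min B then 1 else 2)"

lemma omega_in: assumes "finite B" "B \<noteq> {}" shows "omega i B \<in> B"
proof -
  have "{x\<in>B. x < i} \<noteq> {}" if "\<not> (i \<le> Min B \<or> Max B < i)"
    using that assms Min_in[OF assms] by (metis (mono_tags, lifting) empty_iff mem_Collect_eq not_le)
  then show ?thesis using assms Max_in[OF assms] unfolding omega_def
    using Max_in[of "{x\<in>B. x < i}"] by auto
qed

lemma omega_less: assumes "finite B" "B \<noteq> {}" "\<not> i \<le> Min B" shows "omega i B < i"
proof -
  have "{x\<in>B. x < i} \<noteq> {}" if "\<not> (Max B < i)"
    using assms Min_in[OF assms(1,2)] by (metis (mono_tags, lifting) empty_iff mem_Collect_eq not_le)
  then show ?thesis using assms unfolding omega_def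
    using Max_in[of "{x\<in>B. x < i}"] by auto
qed

lemma omega_ge: assumes "finite B" "B \<noteq> {}" "b \<in> B"
  shows "((if i \<le> b then 1 else 2)::nat, b) \<le> (eb i B, omega i B)"
proof (cases "i \<le> Min B")
  case True
  then show ?thesis using assms by (auto simp: eb_def omega_def)
next
  case False
  show ?thesis
  proof (cases "i \<le> b")
    case True
    then show ?thesis using False by (auto simp: eb_def)
  next
    case nb: False
    then have "b \<le> omega i B" using assms False unfolding omega_def
      by (auto intro: Max_ge)
    then show ?thesis using nb False by (auto simp: eb_def)
  qed
qed

lemma plus_n1_eq: assumes "w \<in> {1..n}" shows "plus_n1 n w = (if w < n then w+1 else 1)"
proof (cases "w < n")
  case True
  then show ?thesis using assms unfolding plus_n1_def
    by (cases "w + 1 = n") auto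
next
  case False
  then have "w = n" using assms by auto
  then show ?thesis using assms unfolding plus_n1_def
    by (cases "n = 1") (auto simp: mod_Suc)
qed

lemma delta_eq: assumes "finite B" "B \<noteq> {}" "B \<subseteq> {1..n}" "i \<in> {1..n}"
  shows "delta n i B = (if omega i B < n then eb i B - 1 else eb i B)"
proof (cases "i \<le> Min B")
  case True
  then show ?thesis by (auto simp: eb_def omega_def delta_def)
next
  case False
  then have "omega i B < n" using omega_less[OF assms(1,2) False] assms(4) by auto
  then show ?thesis using False by (auto simp: eb_def delta_def)
qed

lemma good_sub: assumes a: "good n S" "R \<subseteq> S" shows "good n R"
proof -
  have f: "finite S" and h1: "\<forall>B\<in>S. finite B \<and> B \<noteq> {} \<and> B \<subseteq> {1..n}"
    and h2: "\<forall>B\<in>S. \<forall>C\<in>S. B \<noteq> C \<longrightarrow> B \<inter> C = {}"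
    using a(1) unfolding good_def by simp_all
  have "finite R" by (rule finite_subset[OF a(2) f])
  moreover have "\<forall>B\<in>R. finite B \<and> B \<noteq> {} \<and> B \<subseteq> {1..n}" proof
    fix B assume "B \<in> R" then have "B \<in> S" using a(2) by auto
    then show "finite B \<and> B \<noteq> {} \<and> B \<subseteq> {1..n}" using h1 by auto
  qed
  moreover have "\<forall>B\<in>R. \<forall>C\<in>R. B \<noteq> C \<longrightarrow> B \<inter> C = {}" using h2 a(2) by auto
  ultimately show "good n R" unfolding good_def by (intro conjI)
qed

lemma good_of_partition: assumes "partition_on {1..n} Bs" "S \<subseteq> Bs" shows "good n S"
proof -
  have "\<Union>Bs = {1..n}" using assms(1) unfolding partition_on_def by blast
  then have "finite Bs" using finite_UnionD[of Bs] by simp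
  moreover have "\<forall>B\<in>Bs. finite B \<and> B \<noteq> {} \<and> B \<subseteq> {1..n}" using assms(1) unfolding partition_on_def
    by (auto intro: finite_subset)
  moreover have "\<forall>B\<in>Bs. \<forall>C\<in>Bs. B \<noteq> C \<longrightarrow> B \<inter> C = {}" using assms(1) unfolding partition_on_def
    by (auto simp: disjoint_def)
  ultimately have "good n Bs" unfolding good_def by blast
  then show ?thesis using good_sub assms(2) by blast
qed

lemma exists_placement:
  assumes "good n S" "S \<noteq> {}"
  shows "\<exists>\<kappa>. vp S \<kappa> \<and> (\<forall>x\<in>\<Union>S. (1, i) \<le> pos \<kappa> x)"
proof -
  have fin: "finite S" using assms unfolding good_def by auto
  have "good n S \<longrightarrow> S \<noteq> {} \<longrightarrow> (\<exists>\<kappa>. vp S \<kappa> \<and> (\<forall>x\<in>\<Union>S. (1, i) \<le> pos \<kappa> x))"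
    using fin
  proof (induction S rule: finite_induct)
    case empty
    then show ?case by simp
  next
    case (insert B F)
    show ?case
    proof (intro impI)
      assume g: "good n (insert B F)"
      show "\<exists>\<kappa>. vp (insert B F) \<kappa> \<and> (\<forall>x\<in>\<Union>(insert B F). (1, i) \<le> pos \<kappa> x)"
      proof (cases "F = {}")
        case True
        have "vp (insert B F) (\<lambda>x. 2)" using True by (simp add: vp_def)
        moreover have "\<forall>x\<in>\<Union>(insert B F). (1, i) \<le> pos (\<lambda>x. 2) x" by (simp add: pos_def)
        ultimately show ?thesis by blast
      next
        case False
        have gF: "good n F" using g good_sub by blast
        obtain \<kappa>' where k': "vp F \<kappa>'" "\<forall>x\<in>\<Union>F. (1, i) \<le> pos \<kappa>' x"
          using insert.IH gF False by blast
        define M where "M = Max (\<kappa>' ` \<Union>F)"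
        have finU: "finite (\<Union>F)" using gF unfolding good_def by auto
        have Mge: "\<kappa>' x \<le> M" if "x \<in> \<Union>F" for x using finU that unfolding M_def by auto
        have gd: "\<forall>B\<in>insert B F. \<forall>C\<in>insert B F. B \<noteq> C \<longrightarrow> B \<inter> C = {}"
          using g unfolding good_def by simp
        have disj: "x \<notin> B" if xF: "x \<in> \<Union>F" for x
        proof -
          obtain C where C: "C \<in> F" "x \<in> C" using xF by auto
          then have "C \<noteq> B" using insert.hyps(2) by auto
          then have "B \<inter> C = {}" using gd C(1) by auto
          then show ?thesis using C(2) by auto
        qed
        define \<kappa> where "\<kappa> x = (if x \<in> B then M + 2 else \<kappa>' x)" for x
        have eqF: "\<kappa> x = \<kappa>' x" if "x \<in> \<Union>F" for x using disj that unfolding \<kappa>_def by auto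
        have vp1: "vp (insert B F) \<kappa>"
          unfolding vp_def
        proof (intro conjI ballI impI)
          fix x assume "x \<in> \<Union>(insert B F)"
          then show "1 \<le> \<kappa> x" using k'(1) eqF[of x] unfolding vp_def by (cases "x \<in> B") (auto simp: \<kappa>_def)
        next
          fix C D c d1 d2 assume h: "C \<in> insert B F" "D \<in> insert B F" "C \<noteq> D" "c \<in> C" "d1 \<in> D" "d2 \<in> D"
          show "\<not> (pos \<kappa> d1 < pos \<kappa> c \<and> pos \<kappa> c < pos \<kappa> d2)"
          proof (cases "C = B")
            case True
            then have "D \<in> F" using h by auto
            then have "d2 \<in> \<Union>F" using h by auto
            then have "\<kappa> d2 < \<kappa> c" using True h eqF[of d2] Mge[of d2] by (simp add: \<kappa>_def)
            then show ?thesis by (simp add: pos_less)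
          next
            case CB: False
            show ?thesis
            proof (cases "D = B")
              case True
              then have "C \<in> F" using h CB by auto
              then have "c \<in> \<Union>F" using h by auto
              then have "\<kappa> c < \<kappa> d1" using True h eqF[of c] Mge[of c] by (simp add: \<kappa>_def)
              then show ?thesis by (simp add: pos_less)
            next
              case False
              then have CD: "C \<in> F" "D \<in> F" using h CB by auto
              then have "\<not> (pos \<kappa>' d1 < pos \<kappa>' c \<and> pos \<kappa>' c < pos \<kappa>' d2)"
                using k'(1) h(3-6) unfolding vp_def by blast
              moreover have "pos \<kappa> d1 = pos \<kappa>' d1" "pos \<kappa> d2 = pos \<kappa>' d2" "pos \<kappa> c = pos \<kappa>' c"
                using eqF[of c] eqF[of d1] eqF[of d2] CD h(4-6) by (auto simp: pos_def)
              ultimately show ?thesis by simp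
            qed
          qed
        qed
        moreover have "\<forall>x\<in>\<Union>(insert B F). (1, i) \<le> pos \<kappa> x"
        proof
          fix x assume x: "x \<in> \<Union>(insert B F)"
          show "(1, i) \<le> pos \<kappa> x"
          proof (cases "x \<in> B")
            case True then show ?thesis by (simp add: \<kappa>_def pos_def)
          next
            case False then have "x \<in> \<Union>F" using x by auto
            then show ?thesis using k'(2) eqF[of x] by (auto simp: pos_def)
          qed
        qed
        ultimately show ?thesis by blast
      qed
    qed
  qed
  then show ?thesis using assms by blast
qed

lemma K_witness:
  assumes "good n S" "S \<noteq> {}"
  shows "\<exists>\<kappa>. vp S \<kappa> \<and> (\<forall>x\<in>\<Union>S. (1, i) \<le> pos \<kappa> x) \<and> Max (\<kappa> ` \<Union>S) = K i S"
proof -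
  have fb: "\<forall>B\<in>S. finite B \<and> B \<noteq> {}" using assms unfolding good_def by auto
  obtain \<kappa>0 where "vp S \<kappa>0 \<and> (\<forall>x\<in>\<Union>S. (1, i) \<le> pos \<kappa>0 x)"
    using exists_placement[OF assms] by blast
  then have ex: "\<exists>m \<kappa>. valid_placement S \<kappa> \<and> (\<forall>x\<in>\<Union>S. (1, i) \<le> pos \<kappa> x) \<and> segments_used S \<kappa> = m"
    using valid_alt[OF fb] by blast
  have KE: "K i S = (LEAST m. \<exists>\<kappa>. valid_placement S \<kappa> \<and> (\<forall>x\<in>\<Union>S. (1, i) \<le> pos \<kappa> x) \<and> segments_used S \<kappa> = m)"
    using assms(2) unfolding K_def by simp
  have "\<exists>\<kappa>. valid_placement S \<kappa> \<and> (\<forall>x\<in>\<Union>S. (1, i) \<le> pos \<kappa> x) \<and> segments_used S \<kappa> = (LEAST m. \<exists>\<kappa>. valid_placement S \<kappa> \<and> (\<forall>x\<in>\<Union>S. (1, i) \<le> pos \<kappa> x) \<and> segments_used S \<kappa> = m)"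
    by (rule LeastI_ex[OF ex])
  then obtain \<kappa> where "valid_placement S \<kappa> \<and> (\<forall>x\<in>\<Union>S. (1, i) \<le> pos \<kappa> x) \<and> segments_used S \<kappa> = K i S"
    unfolding KE[symmetric] by blast
  then have a1: "vp S \<kappa>" "\<forall>x\<in>\<Union>S. (1, i) \<le> pos \<kappa> x" "Max (\<kappa> ` \<Union>S) = K i S"
    using valid_alt[OF fb] unfolding segments_used_def by auto
  then show ?thesis by blast
qed

lemma K_le:
  assumes "good n S" "S \<noteq> {}" "vp S \<kappa>" "\<forall>x\<in>\<Union>S. (1, i) \<le> pos \<kappa> x"
  shows "K i S \<le> Max (\<kappa> ` \<Union>S)"
proof -
  have fb: "\<forall>B\<in>S. finite B \<and> B \<noteq> {}" using assms unfolding good_def by auto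
  have "valid_placement S \<kappa>" using valid_alt[OF fb] assms(3) by simp
  then have "\<exists>\<kappa>'. valid_placement S \<kappa>' \<and> (\<forall>x\<in>\<Union>S. (1, i) \<le> pos \<kappa>' x) \<and> segments_used S \<kappa>' = Max (\<kappa> ` \<Union>S)"
    using assms(4) unfolding segments_used_def by blast
  then have "(LEAST m. \<exists>\<kappa>'. valid_placement S \<kappa>' \<and> (\<forall>x\<in>\<Union>S. (1, i) \<le> pos \<kappa>' x) \<and> segments_used S \<kappa>' = m) \<le> Max (\<kappa> ` \<Union>S)"
    by (rule Least_le)
  then show ?thesis unfolding K_def using assms(2) by simp
qed

lemma basics:
  assumes "good n S" "B \<in> S" "i \<in> {1..n}"
  shows "omega i B \<in> B" "omega i B \<in> {1..n}"
    "plus_n1 n (omega i B) = (if omega i B < n then omega i B + 1 else 1)"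
    "delta n i B = (if omega i B < n then eb i B - 1 else eb i B)"
    "eb i B = 1 \<or> eb i B = 2"
    "(1, i) \<le> (eb i B, omega i B)"
    "\<not> i \<le> Min B \<Longrightarrow> omega i B < i"
    "\<forall>b\<in>B. ((if i \<le> b then 1 else 2)::nat, b) \<le> (eb i B, omega i B)"
proof -
  have B: "finite B" "B \<noteq> {}" "B \<subseteq> {1..n}" using assms unfolding good_def by auto
  show w: "omega i B \<in> B" using omega_in[OF B(1,2)] .
  then show w2: "omega i B \<in> {1..n}" using B by auto
  show "plus_n1 n (omega i B) = (if omega i B < n then omega i B + 1 else 1)"
    using plus_n1_eq[OF w2] .
  show "delta n i B = (if omega i B < n then eb i B - 1 else eb i B)"
    using delta_eq[OF B assms(3)] .
  show "eb i B = 1 \<or> eb i B = 2" by (auto simp: eb_def)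
  show "(1, i) \<le> (eb i B, omega i B)"
  proof (cases "i \<le> Min B")
    case True
    then have "i \<le> Max B" using B by (meson Max_ge Min_le dual_order.trans Min_in)
    then show ?thesis using True by (auto simp: eb_def omega_def)
  qed (auto simp: eb_def)
  show "\<not> i \<le> Min B \<Longrightarrow> omega i B < i" using omega_less[OF B(1,2)] by blast
  show "\<forall>b\<in>B. ((if i \<le> b then 1 else 2)::nat, b) \<le> (eb i B, omega i B)"
    using omega_ge[OF B(1,2)] by blast
qed

lemma arithA: fixes e w n j d k' x :: nat
  shows "e = 1 \<or> e = 2 \<Longrightarrow> w < n \<Longrightarrow> j = w+1 \<Longrightarrow> d = e - 1 \<Longrightarrow> (1, j) \<le> (k', x) \<Longrightarrow> (e, w) < (k' + d, x)"
  by (elim disjE) auto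
lemma arithA2: fixes e w d k' x :: nat
  shows "d = e \<Longrightarrow> 1 \<le> k' \<Longrightarrow> (e,w) < (k' + d, x)"
  by auto
lemma arithB: fixes e w n j d k x :: nat
  shows "e = 1 \<or> e = 2 \<Longrightarrow> w < n \<Longrightarrow> j = w+1 \<Longrightarrow> d = e - 1 \<Longrightarrow> (e,w) < (k,x) \<Longrightarrow> d < k \<and> (1,j) \<le> (k - d, x)"
  by (elim disjE) auto
lemma arithB2: fixes e w n j d k x :: nat
  shows "e = 1 \<or> e = 2 \<Longrightarrow> \<not> w<n \<Longrightarrow> j = 1 \<Longrightarrow> d = e \<Longrightarrow> x \<le> n \<Longrightarrow> 1 \<le> x \<Longrightarrow> (e,w) < (k,x) \<Longrightarrow> d < k \<and> (1,j) \<le> (k-d,x)"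
  by (elim disjE) auto

lemma K_empty: "K j {} = (if j = 1 then 0 else 1)" by (simp add: K_def)

lemma upper:
  assumes g: "good n S" and BS: "B \<in> S" and i: "i \<in> {1..n}"
  shows "K i S \<le> delta n i B + K (plus_n1 n (omega i B)) (S - {B})"
proof -
  define w where "w = omega i B"
  define e where "e = eb i B"
  define j where "j = plus_n1 n w"
  define R where "R = S - {B}"
  define d where "d = delta n i B"
  note bs = basics[OF g BS i, folded w_def e_def j_def d_def]
  have Bfin: "finite B" "B \<noteq> {}" using g BS unfolding good_def by auto
  have finU: "finite (\<Union>S)" using g unfolding good_def by auto
  define \<kappa>B where "\<kappa>B x = (if i \<le> x then 1 else 2::nat)" for x
  have Ble: "(\<kappa>B b, b) \<le> (e, w)" if "b \<in> B" for b using bs(8) that unfolding \<kappa>B_def by auto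
  have eI: "(1, i) \<le> (e, w)" using bs(6) .
  have gd: "\<forall>B\<in>S. \<forall>C\<in>S. B \<noteq> C \<longrightarrow> B \<inter> C = {}" using g unfolding good_def by simp
  have disj: "x \<notin> B" if xR: "x \<in> \<Union>R" for x
  proof -
    obtain C where C: "C \<in> R" "x \<in> C" using xR by auto
    then have "C \<noteq> B" "C \<in> S" unfolding R_def by auto
    then have "B \<inter> C = {}" using gd BS by auto
    then show ?thesis using C(2) by auto
  qed
  show ?thesis
  proof (cases "R = {}")
    case True
    then have SB: "S = {B}" using BS unfolding R_def by auto
    have "vp {B} \<kappa>B" unfolding vp_def \<kappa>B_def by auto
    moreover have "\<forall>x\<in>\<Union>{B}. (1, i) \<le> pos \<kappa>B x" by (auto simp: \<kappa>B_def pos_def)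
    ultimately have "K i {B} \<le> Max (\<kappa>B ` \<Union>{B})" using K_le[of n "{B}"] g SB by auto
    also have "\<dots> \<le> e"
    proof -
      have kBe: "\<kappa>B b \<le> e" if "b \<in> B" for b using Ble[OF that] by auto
      then show ?thesis using Bfin by simp
    qed
    also have "e = d + K j R" using True bs(2,3,4,5) by (auto simp: K_empty)
    finally show ?thesis using SB unfolding R_def d_def j_def w_def by simp
  next
    case False
    have gR: "good n R" using g good_sub unfolding R_def by blast
    obtain \<kappa>' where k': "vp R \<kappa>'" "\<forall>x\<in>\<Union>R. (1, j) \<le> pos \<kappa>' x" "Max (\<kappa>' ` \<Union>R) = K j R"
      using K_witness[OF gR False] by blast
    have finR: "finite (\<Union>R)" using gR unfolding good_def by auto
    define \<kappa> where "\<kappa> x = (if x \<in> B then \<kappa>B x else \<kappa>' x + d)" for x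
    have kR: "\<kappa> x = \<kappa>' x + d" if "x \<in> \<Union>R" for x using disj[OF that] unfolding \<kappa>_def by auto
    have k1: "1 \<le> \<kappa>' x" if "x \<in> \<Union>R" for x using k'(1) that unfolding vp_def by auto
    have xn: "x \<in> {1..n}" if xR0: "x \<in> \<Union>R" for x
    proof -
      obtain X where X: "X \<in> R" "x \<in> X" using xR0 by auto
      have "\<forall>B\<in>R. finite B \<and> B \<noteq> {} \<and> B \<subseteq> {1..n}" using gR unfolding good_def by simp
      then have "X \<subseteq> {1..n}" using X(1) by simp
      then show ?thesis using X(2) by (rule subsetD)
    qed
    have Rgt: "(e, w) < (\<kappa> x, x)" if xR: "x \<in> \<Union>R" for x
    proof -
      have a: "(1, j) \<le> (\<kappa>' x, x)" using k'(2) xR by (auto simp: pos_def)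
      have kx: "\<kappa> x = \<kappa>' x + d" using kR[OF xR] .
      have k1x: "1 \<le> \<kappa>' x" using k1[OF xR] .
      have e12: "e = 1 \<or> e = 2" using bs(5) .
      show ?thesis
      proof (cases "w < n")
        case True
        then have jd: "j = w + 1" "d = e - 1" using bs(3,4) by simp_all
        show ?thesis unfolding kx by (rule arithA[OF e12 True jd(1) jd(2) a])
      next
        case False
        then have "d = e" using bs(4) by simp
        then show ?thesis unfolding kx by (rule arithA2[OF _ k1x])
      qed
    qed
    have KR1: "1 \<le> K j R"
    proof -
      obtain C where C: "C \<in> R" using False by blast
      have "\<forall>B\<in>R. finite B \<and> B \<noteq> {} \<and> B \<subseteq> {1..n}" using gR unfolding good_def by simp
      then have "C \<noteq> {}" using C by simp
      then obtain y where "y \<in> C" by blast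
      then have "y \<in> \<Union>R" using C by blast
      then have "\<kappa>' y \<le> Max (\<kappa>' ` \<Union>R)" "1 \<le> \<kappa>' y" using finR k1 by auto
      then show ?thesis using k'(3) by simp
    qed
    have vpS: "vp S \<kappa>"
      unfolding vp_def
    proof (intro conjI ballI impI)
      fix x assume xS: "x \<in> \<Union>S"
      show "1 \<le> \<kappa> x"
      proof (cases "x \<in> B")
        case True then show ?thesis by (simp add: \<kappa>_def \<kappa>B_def)
      next
        case False then have xR: "x \<in> \<Union>R" using xS unfolding R_def by auto
        show ?thesis using kR[OF xR] k1[OF xR] by simp
      qed
    next
      fix C D c d1 d2 assume h: "C \<in> S" "D \<in> S" "C \<noteq> D" "c \<in> C" "d1 \<in> D" "d2 \<in> D"
      show "\<not> (pos \<kappa> d1 < pos \<kappa> c \<and> pos \<kappa> c < pos \<kappa> d2)"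
      proof (cases "C = B")
        case True
        then have "d1 \<in> \<Union>R" using h unfolding R_def by auto
        then have "(e, w) < pos \<kappa> d1" using Rgt by (simp add: pos_def)
        moreover have "pos \<kappa> c \<le> (e, w)" using Ble[of c] h True by (simp add: pos_def \<kappa>_def)
        ultimately show ?thesis by auto
      next
        case CB: False
        show ?thesis
        proof (cases "D = B")
          case True
          then have "c \<in> \<Union>R" using h CB unfolding R_def by auto
          then have "(e, w) < pos \<kappa> c" using Rgt by (simp add: pos_def)
          moreover have "pos \<kappa> d2 \<le> (e, w)" using Ble[of d2] h True by (simp add: pos_def \<kappa>_def)
          ultimately show ?thesis by auto
        next
          case False
          then have CD: "C \<in> R" "D \<in> R" using h CB unfolding R_def by auto
          then have "\<not> (pos \<kappa>' d1 < pos \<kappa>' c \<and> pos \<kappa>' c < pos \<kappa>' d2)"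
            using k'(1) h(3-6) unfolding vp_def by blast
          moreover have "\<kappa> d1 = \<kappa>' d1 + d" "\<kappa> d2 = \<kappa>' d2 + d" "\<kappa> c = \<kappa>' c + d"
            using kR CD h(4-6) by auto
          ultimately show ?thesis by (simp add: pos_less)
        qed
      qed
    qed
    have posS: "\<forall>x\<in>\<Union>S. (1, i) \<le> pos \<kappa> x"
    proof
      fix x assume x: "x \<in> \<Union>S"
      show "(1, i) \<le> pos \<kappa> x"
      proof (cases "x \<in> B")
        case True then show ?thesis by (simp add: \<kappa>_def \<kappa>B_def pos_def)
      next
        case False then have "x \<in> \<Union>R" using x unfolding R_def by auto
        then have "(e, w) < pos \<kappa> x" using Rgt by (simp add: pos_def)
        then show ?thesis using eI by (meson less_imp_le order_trans)
      qed
    qed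
    have SnE: "S \<noteq> {}" using BS by auto
    have "K i S \<le> Max (\<kappa> ` \<Union>S)" using K_le[OF g SnE vpS posS] .
    also have "\<dots> \<le> d + K j R"
    proof -
      have "\<kappa> x \<le> d + K j R" if x: "x \<in> \<Union>S" for x
      proof (cases "x \<in> B")
        case True
        then have "\<kappa> x \<le> e" using Ble[of x] unfolding \<kappa>_def by auto
        then show ?thesis using KR1 bs(4) by auto
      next
        case False then have xR: "x \<in> \<Union>R" using x unfolding R_def by auto
        then have "\<kappa>' x \<le> Max (\<kappa>' ` \<Union>R)" using finR by simp
        then have "\<kappa>' x \<le> K j R" using k'(3) by simp
        then show ?thesis using kR[OF xR] by simp
      qed
      then show ?thesis using finU BS Bfin by (subst Max_le_iff) auto
    qed
    finally show ?thesis unfolding d_def j_def w_def R_def .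
  qed
qed

lemma lower:
  assumes g: "good n S" and SnE: "S \<noteq> {}" and i: "i \<in> {1..n}" and v: "vp S \<kappa>"
    and p: "\<forall>x\<in>\<Union>S. (1, i) \<le> pos \<kappa> x"
  shows "\<exists>B\<in>S. delta n i B + K (plus_n1 n (omega i B)) (S - {B}) \<le> Max (\<kappa> ` \<Union>S)"
proof -
  define U where "U = \<Union>S"
  have finU: "finite U" using g unfolding good_def U_def by auto
  have UnE: "U \<noteq> {}" using g SnE unfolding good_def U_def by auto
  have fimg: "finite (pos \<kappa> ` U)" "pos \<kappa> ` U \<noteq> {}" using finU UnE by auto
  obtain x0 where x0: "x0 \<in> U" "pos \<kappa> x0 = Min (pos \<kappa> ` U)" using Min_in[OF fimg] by auto
  have x0min: "pos \<kappa> x0 \<le> pos \<kappa> x" if "x \<in> U" for x using x0(2) fimg(1) that by auto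
  obtain B where BS: "B \<in> S" and x0B: "x0 \<in> B" using x0(1) unfolding U_def by auto
  define w where "w = omega i B"
  define e where "e = eb i B"
  define j where "j = plus_n1 n w"
  define R where "R = S - {B}"
  define d where "d = delta n i B"
  note bs = basics[OF g BS i, folded w_def e_def j_def d_def]
  have gd: "\<forall>B\<in>S. \<forall>C\<in>S. B \<noteq> C \<longrightarrow> B \<inter> C = {}" using g unfolding good_def by simp
  have wU: "w \<in> U" using bs(1) BS unfolding U_def by auto
  have kmax: "\<kappa> x \<le> Max (\<kappa> ` \<Union>S)" if "x \<in> U" for x using finU that unfolding U_def by auto
  have ewk: "e \<le> \<kappa> w"
  proof (cases "i \<le> Min B")
    case True
    then have "e = 1" unfolding e_def eb_def by simp
    moreover have "1 \<le> \<kappa> w" using v wU unfolding vp_def U_def by auto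
    ultimately show ?thesis by simp
  next
    case False
    then have "w < i" using bs(7) by simp
    moreover have "(1, i) \<le> pos \<kappa> w" using p wU unfolding U_def by auto
    ultimately have "2 \<le> \<kappa> w" by (auto simp: pos_def)
    then show ?thesis using bs(5) by auto
  qed
  have Rgt: "(e, w) < (\<kappa> x, x)" if xR: "x \<in> \<Union>R" for x
  proof -
    obtain C where C: "C \<in> R" "x \<in> C" using xR by auto
    then have CS: "C \<noteq> B" "C \<in> S" unfolding R_def by auto
    then have "B \<inter> C = {}" using gd BS by auto
    then have xB: "x \<notin> B" using C(2) by auto
    then have xw: "x \<noteq> w" "x \<noteq> x0" using bs(1) x0B by auto
    have xU: "x \<in> U" using C CS unfolding U_def by auto
    have ne: "pos \<kappa> x \<noteq> pos \<kappa> w" using xw by (simp add: pos_def)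
    have nlt: "\<not> pos \<kappa> x < pos \<kappa> w"
    proof
      assume lt: "pos \<kappa> x < pos \<kappa> w"
      have "pos \<kappa> x0 \<noteq> pos \<kappa> x" using xw by (simp add: pos_def)
      then have "pos \<kappa> x0 < pos \<kappa> x" using x0min[OF xU] by auto
      then show False using v CS BS C(2) x0B bs(1) lt unfolding vp_def by blast
    qed
    then have "pos \<kappa> w < pos \<kappa> x" using ne by auto
    moreover have "(e, w) \<le> pos \<kappa> w" using ewk by (auto simp: pos_def)
    ultimately show ?thesis by (auto simp: pos_def)
  qed
  show ?thesis
  proof (cases "R = {}")
    case True
    have "d + K j R = e" using True bs(2,3,4,5) by (auto simp: K_empty)
    then have "d + K j R \<le> Max (\<kappa> ` \<Union>S)" using ewk kmax[OF wU] by simp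
    then show ?thesis using BS unfolding d_def j_def w_def R_def by blast
  next
    case False
    have gR: "good n R" using g good_sub unfolding R_def by blast
    have xn: "x \<in> {1..n}" if xR0: "x \<in> \<Union>R" for x
    proof -
      obtain X where X: "X \<in> R" "x \<in> X" using xR0 by auto
      have "\<forall>B\<in>R. finite B \<and> B \<noteq> {} \<and> B \<subseteq> {1..n}" using gR unfolding good_def by simp
      then have "X \<subseteq> {1..n}" using X(1) by simp
      then show ?thesis using X(2) by (rule subsetD)
    qed
    define \<kappa>' where "\<kappa>' x = \<kappa> x - d" for x
    have big: "d < \<kappa> x \<and> (1, j) \<le> (\<kappa> x - d, x)" if xR: "x \<in> \<Union>R" for x
    proof -
      have x1n: "1 \<le> x" "x \<le> n" using xn[OF xR] by auto
      have e12: "e = 1 \<or> e = 2" using bs(5) .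
      show ?thesis
      proof (cases "w < n")
        case True
        then have jd: "j = w + 1" "d = e - 1" using bs(3,4) by simp_all
        show ?thesis using arithB[OF e12 True jd(1) jd(2) Rgt[OF xR]] .
      next
        case False
        then have jd: "j = 1" "d = e" using bs(3,4) by simp_all
        show ?thesis using arithB2[OF e12 False jd(1) jd(2) x1n(2) x1n(1) Rgt[OF xR]] .
      qed
    qed
    have ord: "pos \<kappa>' a < pos \<kappa>' b \<longleftrightarrow> pos \<kappa> a < pos \<kappa> b" if "a \<in> \<Union>R" "b \<in> \<Union>R" for a b
      using big[OF that(1)] big[OF that(2)] unfolding pos_less \<kappa>'_def by auto
    have vR: "vp R \<kappa>'"
      unfolding vp_def
    proof (intro conjI ballI impI)
      fix x assume "x \<in> \<Union>R" then show "1 \<le> \<kappa>' x" using big[of x] unfolding \<kappa>'_def by auto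
    next
      fix C D c d1 d2 assume h: "C \<in> R" "D \<in> R" "C \<noteq> D" "c \<in> C" "d1 \<in> D" "d2 \<in> D"
      have "\<not> (pos \<kappa> d1 < pos \<kappa> c \<and> pos \<kappa> c < pos \<kappa> d2)"
        using v h unfolding vp_def R_def by blast
      moreover have "c \<in> \<Union>R" "d1 \<in> \<Union>R" "d2 \<in> \<Union>R" using h by auto
      ultimately show "\<not> (pos \<kappa>' d1 < pos \<kappa>' c \<and> pos \<kappa>' c < pos \<kappa>' d2)" using ord by blast
    qed
    have pR: "\<forall>x\<in>\<Union>R. (1, j) \<le> pos \<kappa>' x" using big unfolding \<kappa>'_def pos_def by blast
    have KR: "K j R \<le> Max (\<kappa>' ` \<Union>R)" using K_le[OF gR False vR pR] .
    have finR: "finite (\<Union>R)" "\<Union>R \<noteq> {}" using gR False unfolding good_def by auto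
    have "Max (\<kappa>' ` \<Union>R) \<in> \<kappa>' ` \<Union>R" using finR by (intro Max_in) auto
    then obtain x1 where x1: "x1 \<in> \<Union>R" "Max (\<kappa>' ` \<Union>R) = \<kappa>' x1" by blast
    have x1U: "x1 \<in> U" using x1(1) unfolding R_def U_def by auto
    have "d + K j R \<le> d + (\<kappa> x1 - d)" using KR x1(2) unfolding \<kappa>'_def by simp
    also have "\<dots> = \<kappa> x1" using big[OF x1(1)] by simp
    also have "\<dots> \<le> Max (\<kappa> ` \<Union>S)" using kmax[OF x1U] .
    finally show ?thesis using BS unfolding d_def j_def w_def R_def by blast
  qed
qed

theorem mainTheorem2:
  fixes n t :: nat and Bs Bs' :: "nat set set" and i :: nat
  assumes "n \<ge> 1" and "t \<ge> 1"
    and "partition_on {1..n} Bs" and "card Bs = t"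
    and "Bs' \<subseteq> Bs" and "Bs' \<noteq> {}"
    and "i \<in> {1..n}"
  shows "K i Bs' = Min ((\<lambda>B. delta n i B + K (plus_n1 n (omega i B)) (Bs' - {B})) ` Bs')"
proof -
  define f where "f B = delta n i B + K (plus_n1 n (omega i B)) (Bs' - {B})" for B
  have g: "good n Bs'" using good_of_partition assms(3,5) by blast
  have fin: "finite (f ` Bs')" "f ` Bs' \<noteq> {}" using g assms(6) unfolding good_def by auto
  have le: "K i Bs' \<le> Min (f ` Bs')"
  proof -
    obtain B where "B \<in> Bs'" "Min (f ` Bs') = f B" using Min_in[OF fin] by auto
    then show ?thesis using upper[OF g _ assms(7)] unfolding f_def by simp
  qed
  have ge: "Min (f ` Bs') \<le> K i Bs'"
  proof -
    obtain \<kappa> where k: "vp Bs' \<kappa>" "\<forall>x\<in>\<Union>Bs'. (1, i) \<le> pos \<kappa> x" "Max (\<kappa> ` \<Union>Bs') = K i Bs'"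
      using K_witness[OF g assms(6)] by blast
    obtain B where "B \<in> Bs'" "f B \<le> Max (\<kappa> ` \<Union>Bs')"
      using lower[OF g assms(6) assms(7) k(1) k(2)] unfolding f_def by blast
    moreover have "Min (f ` Bs') \<le> f B" using fin(1) \<open>B \<in> Bs'\<close> by auto
    ultimately show ?thesis using k(3) by simp
  qed
  show ?thesis using le ge unfolding f_def by simp
qed

end
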